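(* Let $X\subseteq\mathbb{N}$ be finite, $\omega^{n+6}$-large and exp-sparse. Then $X$ admits an $(\omega^n,\omega)$-grouping: for every colouring $P:[X]^2\to2$ there is an $(\omega^n,\omega)$-grouping for $P$.
   Context: Ordinals below $\omega^\omega$ are in Cantor normal form; $\omega^j\cdot m$ = sum of $m$ copies of $\omega^j$. For $m\in\mathbb{N}$: $0[m]=0$, $(\beta+1)[m]=\beta$, $(\beta+\omega^{n})[m]=\beta+\omega^{n-1}\cdot m$ for $n\ge1$. A finite $X=\{x_0<\dots<x_{\ell-1}\}\subseteq\mathbb{N}$ is $\alpha$-large if $\alpha[x_0]\cdots[x_{\ell-1}]=0$. A set $X$ with $\min X\ge3$ is exp-sparse if $x<y$ in $X$ implies $4^x<y$. For $P:[X]^2\to2$, a finite sequence $\langle F_i\subseteq X:i<\ell\rangle$ of finite sets is an $(\alpha,\beta)$-grouping for $P$ if: (1) $\max F_i<\min F_j$ for $i<j<\ell$; (2) each $F_i$ is $\alpha$-large; (3) $\{\max F_i:i<\ell\}$ is $\beta$-large; (4) for all $i<j<\ell$, $x,x'\in F_i$, $y,y'\in F_j$: $P(x,y)=P(x',y')$. *)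

theory Defs
  imports Main
begin

text \<open>Ordinals below omega^omega in Cantor normal form, represented as the
  non-increasing list of exponents [e1,...,ek] standing for
  omega^e1 + ... + omega^ek (the empty list is 0).\<close>

type_synonym cnf = "nat list"

definition omega_pow :: "nat \<Rightarrow> cnf" where
  "omega_pow n = [n]"

text \<open>Fundamental sequence: 0[m]=0, (b+1)[m]=b, (b+omega^(n+1))[m] = b + omega^n * m.\<close>
definition fund :: "cnf \<Rightarrow> nat \<Rightarrow> cnf" where
  "fund a m = (if a = [] then [] else
     (case last a of 0 \<Rightarrow> butlast a
                   | Suc k \<Rightarrow> butlast a @ replicate m k))"

definition large :: "cnf \<Rightarrow> nat set \<Rightarrow> bool" where
  "large a X \<longleftrightarrow> finite X \<and> foldl fund a (sorted_list_of_set X) = []"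

definition exp_sparse :: "nat set \<Rightarrow> bool" where
  "exp_sparse X \<longleftrightarrow> (\<forall>x\<in>X. 3 \<le> x) \<and> (\<forall>x\<in>X. \<forall>y\<in>X. x < y \<longrightarrow> 4 ^ x < y)"

definition grouping :: "cnf \<Rightarrow> cnf \<Rightarrow> nat set \<Rightarrow> (nat \<Rightarrow> nat \<Rightarrow> bool) \<Rightarrow> nat set list \<Rightarrow> bool" where
  "grouping a b X P Fs \<longleftrightarrow>
     (\<forall>i<length Fs. finite (Fs!i) \<and> Fs!i \<subseteq> X) \<and>
     (\<forall>i j. i < j \<and> j < length Fs \<longrightarrow> Max (Fs!i) < Min (Fs!j)) \<and>
     (\<forall>i<length Fs. large a (Fs!i)) \<and>
     large b {Max (Fs!i) | i. i < length Fs} \<and>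
     (\<forall>i j. i < j \<and> j < length Fs \<longrightarrow>
        (\<forall>x\<in>Fs!i. \<forall>x'\<in>Fs!i. \<forall>y\<in>Fs!j. \<forall>y'\<in>Fs!j. P x y = P x' y'))"

end

theory Submission
  imports Defs "HOL-Library.Multiset"
begin

definition L :: "cnf \<Rightarrow> nat list \<Rightarrow> bool" where
  "L a xs \<longleftrightarrow> foldl fund a xs = []"

lemma fund_Nil[simp]: "fund [] m = []" by (simp add: fund_def)
lemma fund_snoc0[simp]: "fund (a @ [0]) m = a" by (simp add: fund_def)
lemma fund_snocSuc[simp]: "fund (a @ [Suc k]) m = a @ replicate m k" by (simp add: fund_def)
lemma fund_append: "b \<noteq> [] \<Longrightarrow> fund (a @ b) m = a @ fund b m"
  by (simp add: fund_def butlast_append split: nat.split)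

lemma foldl_fund_Nil[simp]: "foldl fund [] xs = []"
  by (induction xs) auto

lemma L_Nil_ord[simp]: "L [] xs" by (simp add: L_def)
lemma L_Nil_list[simp]: "L a [] \<longleftrightarrow> a = []" by (simp add: L_def)
lemma L_Cons[simp]: "L a (x # xs) \<longleftrightarrow> L (fund a x) xs" by (simp add: L_def)

definition R :: "nat \<Rightarrow> cnf \<Rightarrow> cnf \<Rightarrow> bool" where
  "R m a b \<longleftrightarrow> (\<exists>w\<le>m. b = fund a w)"

lemma R_rtr_mono: "(R m)\<^sup>*\<^sup>* a b \<Longrightarrow> m \<le> m' \<Longrightarrow> (R m')\<^sup>*\<^sup>* a b"
proof (induction rule: rtranclp_induct)
  case base then show ?case by simp
next
  case (step y z)
  then obtain w where "w \<le> m" "z = fund y w" by (auto simp: R_def)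
  then have "R m' y z" using step.prems unfolding R_def by (intro exI[of _ w]) auto
  with step show ?case by (meson rtranclp.rtrancl_into_rtrancl)
qed

lemma R_step: "w \<le> m \<Longrightarrow> (R m)\<^sup>*\<^sup>* a (fund a w)"
  by (rule r_into_rtranclp) (auto simp: R_def)

lemma fund_del: "fund (a @ replicate (Suc j) k) 0 = a @ replicate j k"
proof -
  have "a @ replicate (Suc j) k = (a @ replicate j k) @ [k]"
    by (simp add: replicate_append_same)
  moreover have "fund ((a @ replicate j k) @ [k]) 0 = a @ replicate j k"
    by (cases k) (simp_all del: append_assoc)
  ultimately show ?thesis by simp
qed

lemma del_chain: "(R m)\<^sup>*\<^sup>* (a @ replicate (j + i) k) (a @ replicate j k)"
proof (induction i)
  case 0 then show ?case by simp
next
  case (Suc i)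
  have "R m (a @ replicate (j + Suc i) k) (a @ replicate (j + i) k)"
    unfolding R_def using fund_del[of a "j+i" k] by (intro exI[of _ 0]) auto
  with Suc show ?case by (meson converse_rtranclp_into_rtranclp)
qed

lemma chain_from_Nil: "(R m)\<^sup>*\<^sup>* a b \<Longrightarrow> a = [] \<Longrightarrow> b = []"
  by (induction rule: rtranclp_induct) (auto simp: R_def)

lemma step_comm:
  assumes "w \<le> z"
  shows "(R z)\<^sup>*\<^sup>* (fund \<alpha> z) (fund (fund \<alpha> w) z)"
proof (cases \<alpha> rule: rev_exhaust)
  case Nil then show ?thesis by simp
next
  case (snoc a e)
  show ?thesis
  proof (cases e)
    case 0
    then show ?thesis using snoc by (simp add: R_step)
  next
    case (Suc k)
    have 1: "(R z)\<^sup>*\<^sup>* (a @ replicate z k) (a @ replicate w k)"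
      using del_chain[of z a w "z - w" k] assms by simp
    have 2: "(R z)\<^sup>*\<^sup>* (a @ replicate w k) (fund (a @ replicate w k) z)"
      by (rule R_step) simp
    show ?thesis using 1 2 snoc Suc by simp
  qed
qed

lemma chain_comm:
  assumes "(R m)\<^sup>*\<^sup>* \<alpha> \<beta>" "m \<le> z"
  shows "(R z)\<^sup>*\<^sup>* (fund \<alpha> z) (fund \<beta> z)"
  using assms(1)
proof (induction rule: rtranclp_induct)
  case base then show ?case by simp
next
  case (step y y')
  then obtain w where w: "w \<le> m" "y' = fund y w" by (auto simp: R_def)
  have "(R z)\<^sup>*\<^sup>* (fund y z) (fund y' z)"
    using step_comm[of w z y] w assms(2) by simp
  with step.IH show ?case by simp
qed

lemma L_mono_gen:
  "sorted_wrt (<) ys \<Longrightarrow> sorted_wrt (<) xs \<Longrightarrow> set xs \<subseteq> set ys \<Longrightarrow> (R m)\<^sup>*\<^sup>* \<alpha> \<beta>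
   \<Longrightarrow> \<forall>y\<in>set ys. m \<le> y \<Longrightarrow> L \<alpha> xs \<Longrightarrow> L \<beta> ys"
proof (induction ys arbitrary: xs \<alpha> \<beta> m)
  case Nil
  then have "xs = []" by auto
  with Nil have "\<alpha> = []" by simp
  with Nil chain_from_Nil have "\<beta> = []" by blast
  then show ?case by simp
next
  case (Cons y ys)
  show ?case
  proof (cases "xs = []")
    case True
    with Cons.prems have "\<alpha> = []" by simp
    with Cons.prems chain_from_Nil have "\<beta> = []" by blast
    then show ?thesis by simp
  next
    case False
    then obtain x xs' where Cons2: "xs = x # xs'" by (cases xs) auto
    have sys: "sorted_wrt (<) ys" "\<forall>u\<in>set ys. y < u" using Cons.prems(1) by auto
    show ?thesis
    proof (cases "x = y")
      case True
      have "set xs' \<subseteq> set ys"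
        using Cons.prems(2,3) Cons2 True by auto
      moreover have "L (fund \<alpha> y) xs'" using Cons.prems(6) Cons2 True by simp
      moreover have "(R y)\<^sup>*\<^sup>* (fund \<alpha> y) (fund \<beta> y)"
        using chain_comm Cons.prems(4,5) by auto
      ultimately have "L (fund \<beta> y) ys"
        using Cons.IH[where xs=xs' and \<alpha>="fund \<alpha> y" and \<beta>="fund \<beta> y" and m=y] sys Cons.prems(2) Cons2
        by (auto intro: less_imp_le)
      then show ?thesis by simp
    next
      case False
      have xy: "y < x" using Cons.prems(1,2,3) Cons2 False by auto
      have "set xs \<subseteq> set ys"
        using Cons.prems(2,3) Cons2 xy by (auto dest: less_trans)
      moreover have "(R y)\<^sup>*\<^sup>* \<alpha> (fund \<beta> y)"
      proof -
        have "(R y)\<^sup>*\<^sup>* \<alpha> \<beta>" using R_rtr_mono Cons.prems(4,5) by auto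
        moreover have "R y \<beta> (fund \<beta> y)" by (auto simp: R_def)
        ultimately show ?thesis by (meson rtranclp.rtrancl_into_rtrancl)
      qed
      ultimately have "L (fund \<beta> y) ys"
        using Cons.IH[where xs=xs and \<alpha>=\<alpha> and \<beta>="fund \<beta> y" and m=y] sys Cons.prems(2,6)
        by (auto intro: less_imp_le)
      then show ?thesis by simp
    qed
  qed
qed

lemma L_append_D: "L (a @ b) xs \<Longrightarrow> \<exists>ys zs. xs = ys @ zs \<and> L b ys \<and> L a zs"
proof (induction xs arbitrary: b)
  case Nil then show ?case by auto
next
  case (Cons x xs)
  show ?case
  proof (cases "b = []")
    case True
    then show ?thesis using Cons.prems by (intro exI[of _ "[]"] exI[of _ "x # xs"]) auto
  next
    case False
    then have "L (a @ fund b x) xs" using Cons.prems by (simp add: fund_append)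
    from Cons.IH[OF this] obtain ys zs where "xs = ys @ zs" "L (fund b x) ys" "L a zs" by blast
    then show ?thesis by (intro exI[of _ "x # ys"] exI[of _ zs]) auto
  qed
qed

lemma L_append_I: "sorted_wrt (<) (ys @ zs) \<Longrightarrow> L b ys \<Longrightarrow> L a zs \<Longrightarrow> L (a @ b) (ys @ zs)"
proof (induction ys arbitrary: b)
  case Nil then show ?case by simp
next
  case (Cons y ys)
  show ?case
  proof (cases "b = []")
    case True
    have "L a (y # ys @ zs)"
      using L_mono_gen[of "y # ys @ zs" zs 0 a a] Cons.prems
      by (auto simp: sorted_wrt_append)
    then show ?thesis using True by simp
  next
    case False
    then have "L (fund b y) ys" using Cons.prems by simp
    then have "L (a @ fund b y) (ys @ zs)"
      using Cons.IH Cons.prems by (auto simp: sorted_wrt_append)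
    then show ?thesis using False by (simp add: fund_append)
  qed
qed

lemma sls_eq: "finite A \<Longrightarrow> sorted_wrt (<) l \<Longrightarrow> set l = A \<Longrightarrow> sorted_list_of_set A = l"
  by (metis sorted_list_of_set.set_sorted_key_list_of_set strict_sorted_equal
      sorted_list_of_set.strict_sorted_key_list_of_set subset_UNIV)

lemma large_L: "large a S \<longleftrightarrow> finite S \<and> L a (sorted_list_of_set S)"
  by (simp add: large_def L_def)

lemma sls_strict: "sorted_wrt (<) (sorted_list_of_set S)"
  by (metis sorted_list_of_set.strict_sorted_key_list_of_set subset_UNIV)

lemma large_mono: "large a S \<Longrightarrow> S \<subseteq> T \<Longrightarrow> finite T \<Longrightarrow> large a T"
  unfolding large_L using L_mono_gen[of "sorted_list_of_set T" "sorted_list_of_set S" 0 a a]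
  by (auto simp: sls_strict)

lemma large_dom: "large a S \<Longrightarrow> (R m)\<^sup>*\<^sup>* a b \<Longrightarrow> \<forall>s\<in>S. m \<le> s \<Longrightarrow> large b S"
  unfolding large_L using L_mono_gen[of "sorted_list_of_set S" "sorted_list_of_set S" m a b]
  by (auto simp: sls_strict)

lemma sls_union:
  assumes "finite S1" "finite S2" "\<forall>x\<in>S1. \<forall>y\<in>S2. x < y"
  shows "sorted_list_of_set (S1 \<union> S2) = sorted_list_of_set S1 @ sorted_list_of_set S2"
  using assms by (intro sls_eq) (auto simp: sorted_wrt_append sls_strict)

lemma large_append_D:
  assumes "large (a @ b) S"
  shows "\<exists>S1 S2. S = S1 \<union> S2 \<and> (\<forall>x\<in>S1. \<forall>y\<in>S2. x < y) \<and> large b S1 \<and> large a S2"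
proof -
  have fin: "finite S" and "L (a @ b) (sorted_list_of_set S)" using assms by (auto simp: large_L)
  then obtain ys zs where yz: "sorted_list_of_set S = ys @ zs" "L b ys" "L a zs"
    using L_append_D by blast
  have st: "sorted_wrt (<) (ys @ zs)" using yz(1) sls_strict by metis
  have "S = set ys \<union> set zs" using yz(1) fin by (metis set_append sorted_list_of_set.set_sorted_key_list_of_set)
  moreover have "sorted_list_of_set (set ys) = ys" "sorted_list_of_set (set zs) = zs"
    using st by (auto intro: sls_eq simp: sorted_wrt_append)
  ultimately show ?thesis using yz st
    by (intro exI[of _ "set ys"] exI[of _ "set zs"]) (auto simp: large_L sorted_wrt_append)
qed

lemma large_append_I:
  assumes "finite S1" "finite S2" "\<forall>x\<in>S1. \<forall>y\<in>S2. x < y" "large b S1" "large a S2"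
  shows "large (a @ b) (S1 \<union> S2)"
proof -
  have "sorted_wrt (<) (sorted_list_of_set S1 @ sorted_list_of_set S2)"
    using sls_union[OF assms(1-3)] sls_strict by metis
  then show ?thesis using assms sls_union[OF assms(1-3)] L_append_I
    by (auto simp: large_L)
qed

lemma large_Suc: "large [Suc k] S \<longleftrightarrow> finite S \<and> S \<noteq> {} \<and> large (replicate (Min S) k) (S - {Min S})"
proof (cases "finite S \<and> S \<noteq> {}")
  case True
  then show ?thesis by (auto simp: large_L sorted_list_of_set_nonempty fund_def)
next
  case False
  then show ?thesis by (auto simp: large_L)
qed

lemma foldl_rep0: "foldl fund (replicate j 0) xs = replicate (j - length xs) 0"
proof (induction xs arbitrary: j)
  case Nil then show ?case by simp
next
  case (Cons x xs)
  have "fund (replicate j 0) x = replicate (j - 1) 0"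
  proof (cases j)
    case (Suc j')
    have "replicate j 0 = replicate j' 0 @ [0]" using Suc by (simp add: replicate_append_same)
    then show ?thesis using Suc by (metis fund_snoc0 diff_Suc_1)
  qed simp
  then show ?case using Cons by simp
qed

lemma large_rep0: "large (replicate j 0) S \<longleftrightarrow> finite S \<and> j \<le> card S"
  by (auto simp: large_def foldl_rep0)

lemma large_del: "large (replicate j k) S \<Longrightarrow> i \<le> j \<Longrightarrow> large (replicate i k) S"
  using large_dom[of "replicate j k" S 0 "replicate i k"] del_chain[of 0 "[]" i "j - i" k]
  by simp

lemma lower_chain: "i \<le> j \<Longrightarrow> (R 1)\<^sup>*\<^sup>* [j] [i]"
proof (induction j)
  case 0 then show ?case by simp
next
  case (Suc j)
  show ?case
  proof (cases "i = Suc j")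
    case False
    then have "(R 1)\<^sup>*\<^sup>* [j] [i]" using Suc by simp
    moreover have "R 1 [Suc j] [j]" unfolding R_def by (intro exI[of _ 1]) (simp add: fund_def)
    ultimately show ?thesis by (meson converse_rtranclp_into_rtranclp)
  qed simp
qed

lemma large_lower: "large [j] S \<Longrightarrow> i \<le> j \<Longrightarrow> \<forall>s\<in>S. 1 \<le> s \<Longrightarrow> large [i] S"
  using large_dom lower_chain by blast

lemma large_nonempty: "large a S \<Longrightarrow> a \<noteq> [] \<Longrightarrow> S \<noteq> {}"
  by (auto simp: large_L)

definition dl :: "nat multiset \<Rightarrow> nat list" where "dl M = rev (sorted_list_of_multiset M)"

lemma mset_dl[simp]: "mset (dl M) = M" by (simp add: dl_def)
lemma set_dl[simp]: "set (dl M) = set_mset M" by (metis mset_dl set_mset_mset)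
lemma sorted_rev_dl: "sorted (rev (dl M))" by (simp add: dl_def)
lemma dl_unique: "sorted (rev xs) \<Longrightarrow> mset xs = M \<Longrightarrow> dl M = xs"
proof -
  assume a: "sorted (rev xs)" "mset xs = M"
  have "sort xs = rev xs" using a(1) by (intro properties_for_sort) auto
  then show ?thesis using a(2) by (auto simp: dl_def)
qed
lemma dl_empty[simp]: "dl {#} = []" by (simp add: dl_def)
lemma dl_eq_Nil: "dl M = [] \<longleftrightarrow> M = {#}" by (metis mset_dl mset_zero_iff_right dl_empty)

definition sdom :: "nat \<Rightarrow> cnf \<Rightarrow> cnf \<Rightarrow> bool" where
  "sdom m \<alpha> \<beta> \<longleftrightarrow> (\<forall>xs. sorted_wrt (<) xs \<longrightarrow> (\<forall>x\<in>set xs. m \<le> x) \<longrightarrow> L \<alpha> xs \<longrightarrow> L \<beta> xs)"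

lemma sD2:
  assumes "1 \<le> e" "y \<le> m"
  shows "sdom m (\<mu> @ [e] @ \<nu>) (\<mu> @ replicate y (e - 1) @ \<nu>)"
  unfolding sdom_def
proof (intro allI impI)
  fix xs assume st: "sorted_wrt (<) xs" and ge: "\<forall>x\<in>set xs. m \<le> x" and H: "L (\<mu> @ [e] @ \<nu>) xs"
  from H have "L ((\<mu> @ [e]) @ \<nu>) xs" by simp
  then obtain ys zs where yz: "xs = ys @ zs" "L \<nu> ys" "L (\<mu> @ [e]) zs" using L_append_D by blast
  then obtain z zs' where zs: "zs = z # zs'" by (cases zs) auto
  have stz: "sorted_wrt (<) zs'" "\<forall>u\<in>set zs'. z \<le> u"
    using st yz(1) zs by (auto simp: sorted_wrt_append intro: less_imp_le)
  have yz': "y \<le> z" using ge yz(1) zs assms(2) by auto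
  have e: "fund (\<mu> @ [e]) y = \<mu> @ replicate y (e - 1)" using assms(1) by (cases e) auto
  have "L (fund (\<mu> @ [e]) z) zs'" using yz(3) zs by simp
  then have "L (fund (fund (\<mu> @ [e]) y) z) zs'"
    using L_mono_gen[of zs' zs' z "fund (\<mu> @ [e]) z" "fund (fund (\<mu> @ [e]) y) z"] step_comm[OF yz'] stz
    by auto
  then have "L (\<mu> @ replicate y (e - 1)) zs" using zs e by simp
  then have "L ((\<mu> @ replicate y (e - 1)) @ \<nu>) (ys @ zs)" using L_append_I st yz by blast
  then show "L (\<mu> @ replicate y (e - 1) @ \<nu>) xs" using yz(1) by simp
qed

lemma sD1: "sdom m (\<mu> @ [e] @ \<nu>) (\<mu> @ \<nu>)"
  unfolding sdom_def
proof (intro allI impI)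
  fix xs assume st: "sorted_wrt (<) xs" and ge: "\<forall>x\<in>set xs. m \<le> x" and H: "L (\<mu> @ [e] @ \<nu>) xs"
  from H have "L ((\<mu> @ [e]) @ \<nu>) xs" by simp
  then obtain ys zs where yz: "xs = ys @ zs" "L \<nu> ys" "L (\<mu> @ [e]) zs" using L_append_D by blast
  have "fund (\<mu> @ [e]) 0 = \<mu>" by (cases e) auto
  then have "(R 0)\<^sup>*\<^sup>* (\<mu> @ [e]) \<mu>" using R_step[of 0 0 "\<mu> @ [e]"] by simp
  then have "L \<mu> zs" using L_mono_gen[of zs zs 0 "\<mu> @ [e]" \<mu>] st yz by (auto simp: sorted_wrt_append)
  then have "L (\<mu> @ \<nu>) (ys @ zs)" using L_append_I st yz by blast
  then show "L (\<mu> @ \<nu>) xs" using yz(1) by simp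
qed

definition mdom :: "nat \<Rightarrow> nat multiset \<Rightarrow> nat multiset \<Rightarrow> bool" where
  "mdom m M N \<longleftrightarrow> sdom m (dl M) (dl N)"

lemma mdom_refl: "mdom m M M" by (simp add: mdom_def sdom_def)
lemma mdom_trans: "mdom m M N \<Longrightarrow> mdom m N K \<Longrightarrow> mdom m M K"
  by (simp add: mdom_def sdom_def)

lemma filter_part: "filter_mset (\<lambda>v. (e::nat) \<le> v) M + filter_mset (\<lambda>v. v < e) M = M"
proof (induction M)
  case (add x M)
  then show ?case by (cases "e \<le> x") auto
qed simp

lemma dl_split1:
  assumes "y = 0 \<or> 1 \<le> e"
  shows "dl (M + replicate_mset y (e - 1)) =
    dl (filter_mset (\<lambda>v. e \<le> v) M) @ replicate y (e - 1) @ dl (filter_mset (\<lambda>v. v < e) M)"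
proof (rule dl_unique)
  show "sorted (rev (dl (filter_mset (\<lambda>v. e \<le> v) M) @ replicate y (e - 1) @ dl (filter_mset (\<lambda>v. v < e) M)))"
    using assms sorted_rev_dl[of "filter_mset (\<lambda>v. e \<le> v) M"] sorted_rev_dl[of "filter_mset (\<lambda>v. v < e) M"]
    by (auto simp: sorted_append)
  show "mset (dl (filter_mset (\<lambda>v. e \<le> v) M) @ replicate y (e - 1) @ dl (filter_mset (\<lambda>v. v < e) M)) =
    M + replicate_mset y (e - 1)"
    using filter_part[of e M] by (simp add: ac_simps)
qed

lemma dl_split2:
  "dl (M + {#e#}) = dl (filter_mset (\<lambda>v. e \<le> v) M) @ [e] @ dl (filter_mset (\<lambda>v. v < e) M)"
proof (rule dl_unique)
  show "sorted (rev (dl (filter_mset (\<lambda>v. e \<le> v) M) @ [e] @ dl (filter_mset (\<lambda>v. v < e) M)))"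
    using sorted_rev_dl[of "filter_mset (\<lambda>v. e \<le> v) M"] sorted_rev_dl[of "filter_mset (\<lambda>v. v < e) M"]
    by (auto simp: sorted_append)
  show "mset (dl (filter_mset (\<lambda>v. e \<le> v) M) @ [e] @ dl (filter_mset (\<lambda>v. v < e) M)) = M + {#e#}"
    using filter_part[of e M] by (simp add: ac_simps)
qed

lemma mD1: "mdom m (M + {#e#}) M"
  using dl_split1[of 0 e M] dl_split2[of M e] sD1 by (simp add: mdom_def)

lemma mD2: "1 \<le> e \<Longrightarrow> y \<le> m \<Longrightarrow> mdom m (M + {#e#}) (M + replicate_mset y (e - 1))"
  using dl_split1[of y e M] dl_split2[of M e] sD2 by (simp add: mdom_def)

lemma mD_del: "mdom m (M + N) M"
proof (induction N)
  case empty then show ?case by (simp add: mdom_refl)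
next
  case (add x N)
  have "mdom m (M + add_mset x N) (M + N)" using mD1[of m "M + N" x] by simp
  then show ?case using add mdom_trans by blast
qed

lemma mD_down: "u \<le> v \<Longrightarrow> 1 \<le> m \<Longrightarrow> mdom m (M + {#v#}) (M + {#u#})"
proof (induction v)
  case 0 then show ?case by (simp add: mdom_refl)
next
  case (Suc v)
  show ?case
  proof (cases "u = Suc v")
    case True then show ?thesis by (simp add: mdom_refl)
  next
    case False
    then have "mdom m (M + {#v#}) (M + {#u#})" using Suc by simp
    moreover have "mdom m (M + {#Suc v#}) (M + {#v#})"
      using mD2[of "Suc v" 1 m M] Suc.prems by simp
    ultimately show ?thesis using mdom_trans by blast
  qed
qed

definition mfund :: "nat multiset \<Rightarrow> nat \<Rightarrow> nat multiset" where
  "mfund A x = (if A = {#} then {#} else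
     (case Min (set_mset A) of 0 \<Rightarrow> A - {#0#} | Suc k \<Rightarrow> A - {#Suc k#} + replicate_mset x k))"

lemma fund_dl: "fund (dl A) x = dl (mfund A x)"
proof (cases "A = {#}")
  case False
  define e where "e = Min (set_mset A)"
  have eA: "e \<in># A" using False by (simp add: e_def)
  have ge: "\<forall>v \<in># A - {#e#}. e \<le> v"
    by (auto simp: e_def dest: in_diffD)
  have d: "dl A = dl (A - {#e#}) @ [e]"
    by (rule dl_unique) (use ge sorted_rev_dl[of "A - {#e#}"] eA in \<open>auto simp: sorted_append\<close>)
  show ?thesis
  proof (cases e)
    case 0
    then show ?thesis using d False by (simp add: mfund_def e_def[symmetric])
  next
    case (Suc k)
    have "dl (A - {#e#}) @ replicate x k = dl (A - {#e#} + replicate_mset x k)"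
      by (rule sym, rule dl_unique) (use ge sorted_rev_dl[of "A - {#e#}"] Suc in \<open>auto simp: sorted_append\<close>)
    then show ?thesis using d False Suc by (simp add: mfund_def e_def[symmetric])
  qed
qed (simp add: mfund_def)

lemma Min_mset_le: "v \<in># A \<Longrightarrow> Min (set_mset A) \<le> v" by simp

lemma mfund_add:
  assumes A: "A \<noteq> {#}" and B: "\<forall>v\<in>#B. Min (set_mset A) \<le> v"
  shows "mfund (A + B) x = mfund A x + B"
proof -
  define e where "e = Min (set_mset A)"
  have eA: "e \<in># A" using A by (simp add: e_def)
  have m: "Min (set_mset (A + B)) = e"
    by (rule Min_eqI) (use B eA in \<open>auto simp: e_def\<close>)
  have d: "A + B - {#e#} = (A - {#e#}) + B" using eA
    by (metis add.commute diff_union_single_conv)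
  show ?thesis
    using A m d by (cases e) (auto simp: mfund_def e_def[symmetric] ac_simps)
qed

lemma domswap:
  assumes A: "A \<noteq> {#}" and B: "B \<noteq> {#}" and fe: "Min (set_mset B) < Min (set_mset A)" and xm: "x < m"
  shows "mdom m (A + mfund B x) (mfund A x + B)"
proof -
  define e where "e = Min (set_mset A)"
  define f where "f = Min (set_mset B)"
  obtain k where ek: "e = Suc k" using fe unfolding e_def[symmetric] f_def[symmetric] by (cases e) auto
  have eA: "e \<in># A" using A by (simp add: e_def)
  have fB: "f \<in># B" using B by (simp add: f_def)
  define A0 where "A0 = A - {#e#}"
  define B0 where "B0 = B - {#f#}"
  have Aeq: "A = A0 + {#e#}" using eA by (simp add: A0_def)
  have Beq: "B = B0 + {#f#}" using fB by (simp add: B0_def)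
  define tl where "tl = (case f of 0 \<Rightarrow> {#} | Suc j \<Rightarrow> replicate_mset x j)"
  have mB: "mfund B x = B0 + tl"
    using B by (cases f) (auto simp: mfund_def f_def[symmetric] B0_def tl_def)
  have mA: "mfund A x = A0 + replicate_mset x k"
    using A ek by (auto simp: mfund_def e_def[symmetric] A0_def)
  have s1: "mdom m (A + mfund B x) (A0 + B0 + {#e#})"
  proof -
    have "A + mfund B x = (A0 + B0 + {#e#}) + tl" using Aeq mB by (simp add: ac_simps)
    then show ?thesis using mD_del[of m "A0 + B0 + {#e#}" tl] by metis
  qed
  have s2: "mdom m (A0 + B0 + {#e#}) ((A0 + B0 + replicate_mset x k) + {#k#})"
    using mD2[of e "Suc x" m "A0 + B0"] ek xm by (simp add: ac_simps)
  have s3: "mdom m ((A0 + B0 + replicate_mset x k) + {#k#}) ((A0 + B0 + replicate_mset x k) + {#f#})"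
    using mD_down[of f k m] fe ek xm unfolding e_def[symmetric] f_def[symmetric] by simp
  have "(A0 + B0 + replicate_mset x k) + {#f#} = mfund A x + B" using mA Beq by (simp add: ac_simps)
  then show ?thesis using s1 s2 s3 mdom_trans by metis
qed

lemma ph_list:
  "sorted_wrt (<) xs \<Longrightarrow> L (dl (A + B)) xs \<Longrightarrow> L (dl A) (filter T xs) \<or> L (dl B) (filter (\<lambda>x. \<not> T x) xs)"
proof (induction xs arbitrary: A B)
  case Nil
  then have "A + B = {#}" using dl_eq_Nil by simp
  then show ?case by simp
next
  case (Cons x xs)
  have st: "sorted_wrt (<) xs" "\<forall>u\<in>set xs. Suc x \<le> u" using Cons.prems(1) by (auto simp: Suc_le_eq)
  have H: "L (dl (mfund (A + B) x)) xs" using Cons.prems(2) by (simp add: fund_dl)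
  show ?case
  proof (cases "A = {#} \<or> B = {#}")
    case True then show ?thesis by auto
  next
    case False
    then have A: "A \<noteq> {#}" and B: "B \<noteq> {#}" by auto
    have c1: "mdom (Suc x) (mfund (A + B) x) (mfund A x + B)"
    proof (cases "Min (set_mset A) \<le> Min (set_mset B)")
      case True
      then have "mfund (A + B) x = mfund A x + B" by (intro mfund_add[OF A]) (meson Min_mset_le le_trans nle_le)
      then show ?thesis by (simp add: mdom_refl)
    next
      case False
      then have "mfund (B + A) x = mfund B x + A" by (intro mfund_add[OF B]) (meson Min_mset_le le_trans nle_le)
      then have "mfund (A + B) x = A + mfund B x" by (simp add: ac_simps)
      then show ?thesis using domswap[OF A B _ , of x "Suc x"] False by simp
    qed
    have c2: "mdom (Suc x) (mfund (A + B) x) (A + mfund B x)"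
    proof (cases "Min (set_mset B) \<le> Min (set_mset A)")
      case True
      then have "mfund (B + A) x = mfund B x + A" by (intro mfund_add[OF B]) (meson Min_mset_le le_trans nle_le)
      then show ?thesis by (simp add: mdom_refl ac_simps)
    next
      case False
      then have "mfund (A + B) x = mfund A x + B" by (intro mfund_add[OF A]) (meson Min_mset_le le_trans nle_le)
      then show ?thesis using domswap[OF B A _ , of x "Suc x"] False by (simp add: ac_simps)
    qed
    show ?thesis
    proof (cases "T x")
      case True
      have "L (dl (mfund A x + B)) xs" using c1 H st unfolding mdom_def sdom_def by blast
      from Cons.IH[OF st(1) this] show ?thesis using True by (auto simp: fund_dl)
    next
      case False
      have "L (dl (A + mfund B x)) xs" using c2 H st unfolding mdom_def sdom_def by blast
      from Cons.IH[OF st(1) this] show ?thesis using False by (auto simp: fund_dl)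
    qed
  qed
qed

lemma dl_rep: "dl (replicate_mset a k) = replicate a k"
  by (rule dl_unique) auto

lemma sls_filter: "finite S \<Longrightarrow> sorted_list_of_set {x\<in>S. P x} = filter P (sorted_list_of_set S)"
  by (rule sls_eq) (auto simp: sls_strict sorted_wrt_filter)

lemma PH2:
  assumes "large (replicate (a + b) k) S"
  shows "large (replicate a k) {x\<in>S. P x} \<or> large (replicate b k) {x\<in>S. \<not> P x}"
proof -
  have fin: "finite S" using assms by (simp add: large_L)
  have "dl (replicate_mset a k + replicate_mset b k) = replicate (a + b) k"
    by (rule dl_unique) (auto simp: multiset_eq_iff)
  then have "L (dl (replicate_mset a k + replicate_mset b k)) (sorted_list_of_set S)"
    using assms by (simp add: large_L)
  from ph_list[OF sls_strict this, of P] show ?thesis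
    using fin by (auto simp: large_L sls_filter[OF fin] dl_rep)
qed

lemma PHN:
  assumes "finite C" "C \<noteq> {}"
  shows "f ` S \<subseteq> C \<Longrightarrow> large (replicate (card C * M) k) S \<Longrightarrow> \<exists>c\<in>C. large (replicate M k) {s\<in>S. f s = c}"
  using assms
proof (induction C arbitrary: S rule: finite_ne_induct)
  case (singleton c)
  then have "{s\<in>S. f s = c} = S" by auto
  then show ?case using singleton by auto
next
  case (insert c C)
  have "large (replicate (M + card C * M) k) S" using insert by simp
  from PH2[OF this, of "\<lambda>s. f s = c"]
  show ?case
  proof
    assume "large (replicate M k) {s\<in>S. f s = c}" then show ?thesis by auto
  next
    assume h: "large (replicate (card C * M) k) {s\<in>S. f s \<noteq> c}"
    have "f ` {s\<in>S. f s \<noteq> c} \<subseteq> C" using insert.prems by auto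
    from insert.IH[OF this h] obtain c' where "c' \<in> C" "large (replicate M k) {s\<in>{s\<in>S. f s \<noteq> c}. f s = c'}"
      by blast
    moreover have "{s\<in>{s\<in>S. f s \<noteq> c}. f s = c'} = {s\<in>S. f s = c'}" using \<open>c' \<in> C\<close> insert.hyps by auto
    ultimately show ?thesis by auto
  qed
qed


lemma blocks:
  "large (replicate M k) S \<Longrightarrow> \<exists>Ds. length Ds = M \<and> (\<forall>j<M. Ds!j \<subseteq> S \<and> large [k] (Ds!j)) \<and>
     (\<forall>i j x y. i < j \<and> j < M \<and> x \<in> Ds!i \<and> y \<in> Ds!j \<longrightarrow> x < y)"
proof (induction M arbitrary: S)
  case 0 then show ?case by (intro exI[of _ "[]"]) simp
next
  case (Suc M)
  have "replicate (Suc M) k = replicate M k @ [k]" by (simp add: replicate_append_same)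
  with Suc.prems have "large (replicate M k @ [k]) S" by simp
  from large_append_D[OF this] obtain S1 S2 where sp: "S = S1 \<union> S2" "\<forall>x\<in>S1. \<forall>y\<in>S2. x < y" "large [k] S1"
    "large (replicate M k) S2" by blast
  from Suc.IH[OF sp(4)] obtain Ds where Ds0: "length Ds = M \<and> (\<forall>j<M. Ds!j \<subseteq> S2 \<and> large [k] (Ds!j)) \<and>
    (\<forall>i j x y. i < j \<and> j < M \<and> x \<in> Ds!i \<and> y \<in> Ds!j \<longrightarrow> x < y)" ..
  have Ds: "length Ds = M" "\<forall>j<M. Ds!j \<subseteq> S2 \<and> large [k] (Ds!j)"
    "\<forall>i j x y. i < j \<and> j < M \<and> x \<in> Ds!i \<and> y \<in> Ds!j \<longrightarrow> x < y" using Ds0[THEN conjunct1] Ds0[THEN conjunct2, THEN conjunct1] Ds0[THEN conjunct2, THEN conjunct2] by this+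
  have a: "length (S1 # Ds) = Suc M" using Ds(1) by simp
  have b: "\<forall>j<Suc M. (S1 # Ds) ! j \<subseteq> S \<and> large [k] ((S1 # Ds) ! j)"
  proof (intro allI impI)
    fix j assume "j < Suc M"
    then show "(S1 # Ds) ! j \<subseteq> S \<and> large [k] ((S1 # Ds) ! j)"
    proof (cases j)
      case 0 then show ?thesis using sp by simp
    next
      case (Suc j')
      then have "j' < M" using \<open>j < Suc M\<close> by simp
      then show ?thesis using Ds(2) Suc sp(1) by auto
    qed
  qed
  have c: "\<forall>i j x y. i < j \<and> j < Suc M \<and> x \<in> (S1 # Ds) ! i \<and> y \<in> (S1 # Ds) ! j \<longrightarrow> x < y"
  proof (intro allI impI)
    fix i j x y assume h: "i < j \<and> j < Suc M \<and> x \<in> (S1 # Ds) ! i \<and> y \<in> (S1 # Ds) ! j"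
    then obtain j' where j': "j = Suc j'" by (cases j) auto
    show "x < y"
    proof (cases i)
      case 0
      have "j' < M" using h j' by simp
      then have "y \<in> S2" using h j' Ds(2) by auto
      moreover have "x \<in> S1" using h 0 by simp
      ultimately show ?thesis using sp(2) by blast
    next
      case (Suc i')
      have "i' < j' \<and> j' < M \<and> x \<in> Ds!i' \<and> y \<in> Ds!j'" using h j' Suc by simp
      then show ?thesis using Ds(3) by blast
    qed
  qed
  show ?case by (rule exI[of _ "S1 # Ds"]) (intro conjI a b c)
qed

lemma sparse_count:
  assumes "exp_sparse X" "d \<in> X"
  shows "2 ^ card {x\<in>X. x < d} \<le> d"
proof (cases "{x\<in>X. x < d} = {}")
  case True
  then have c0: "card {x\<in>X. x < d} = 0" by simp
  have "(1::nat) \<le> d" using assms by (auto simp: exp_sparse_def)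
  then show ?thesis by (simp only: c0 power_0)
next
  case False
  let ?Y = "{x\<in>X. x < d}"
  have fin: "finite ?Y" by (rule finite_subset[of _ "{..<d}"]) (auto simp: lessThan_def)
  define m where "m = Max ?Y"
  have mY: "m \<in> ?Y" using Max_in[OF fin False] by (simp add: m_def)
  have "?Y \<subseteq> {..m}" using fin unfolding m_def by (intro subsetI) (simp add: Max_ge)
  then have c: "card ?Y \<le> Suc m" using card_mono[of "{..m}" ?Y] by simp
  have sp1: "\<forall>x\<in>X. 3 \<le> x" and sp2: "\<forall>x\<in>X. \<forall>y\<in>X. x < y \<longrightarrow> 4 ^ x < y"
    using assms(1) unfolding exp_sparse_def by blast+
  have mX: "m \<in> X" "m < d" using mY by blast+
  have m3: "3 \<le> m" using sp1 mX(1) by blast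
  have md: "4 ^ m < d" using sp2 mX assms(2) by blast
  have "(2::nat) ^ card ?Y \<le> 2 ^ Suc m" using c by (intro power_increasing) auto
  also have "\<dots> \<le> 2 ^ (2 * m)" using m3 by (intro power_increasing) auto
  also have "\<dots> = (2 ^ 2) ^ m" by (rule power_mult)
  also have "\<dots> = 4 ^ m" by simp
  finally show ?thesis using md by (meson le_less_trans less_imp_le)
qed

lemma PG:
  fixes Es :: "nat set list" and P :: "nat \<Rightarrow> nat \<Rightarrow> bool"
  assumes "\<forall>i j x y. i < j \<and> j < length Es \<and> x \<in> Es!i \<and> y \<in> Es!j \<longrightarrow> x < y"
    and "\<forall>j<length Es. \<forall>x\<in>Es!j. 2 ^ length Es \<le> x"
    and "\<forall>j<length Es. large (replicate (2 ^ (\<Sum>i<j. card (Es!i))) (Suc n)) (Es!j)"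
  shows "\<exists>Gs. length Gs = length Es \<and> (\<forall>j<length Es. Gs!j \<subseteq> Es!j \<and> large [n] (Gs!j)) \<and>
     (\<forall>i j. i < j \<and> j < length Es \<longrightarrow> (\<exists>c. \<forall>x\<in>Gs!i. \<forall>y\<in>Gs!j. P x y = c))"
  using assms
proof (induction "length Es" arbitrary: Es)
  case 0 then show ?case by simp
next
  case (Suc r)
  obtain E Es' where EEs: "Es = E # Es'" using Suc.hyps(2) by (cases Es) auto
  note prems = Suc.prems[unfolded EEs]
  have rr: "r = length Es'" using Suc.hyps(2) EEs by simp
  let ?r = "length Es'"
  define g where "g y = {x\<in>E. P x y}" for y
  define s' where "s' j = (\<Sum>i<j. card (Es'!i))" for j
  have LE0: "large [Suc n] E" using prems(3) by (auto dest: spec[of _ 0])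
  have finE: "finite E" using LE0 by (auto simp: large_L)
  have finEs': "finite (Es'!j)" if "j < ?r" for j
    using prems(3) that by (auto simp: large_L dest!: spec[of _ "Suc j"])
  have lgE': "large (replicate (card (Pow E) * 2 ^ s' j) (Suc n)) (Es'!j)" if "j < ?r" for j
  proof -
    have "(\<Sum>i<Suc j. card ((E # Es')!i)) = card E + s' j"
      by (simp only: sum.lessThan_Suc_shift) (simp add: s'_def)
    then show ?thesis using prems(3) that finE
      by (auto simp: card_Pow power_add dest!: spec[of _ "Suc j"])
  qed
  have "\<exists>p. p \<subseteq> E \<and> large (replicate (2 ^ s' j) (Suc n)) {y\<in>Es'!j. g y = p}" if "j < ?r" for j
    using PHN[of "Pow E" g "Es'!j" "2 ^ s' j" "Suc n"] lgE'[OF that] finE by (auto simp: g_def)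
  then have "\<forall>j. \<exists>p. j < ?r \<longrightarrow> p \<subseteq> E \<and> large (replicate (2 ^ s' j) (Suc n)) {y\<in>Es'!j. g y = p}"
    by blast
  from choice[OF this] obtain pf where pf: "\<forall>j<?r. pf j \<subseteq> E \<and> large (replicate (2 ^ s' j) (Suc n)) {y\<in>Es'!j. g y = pf j}"
    by blast
  define Es'' where "Es'' = map (\<lambda>j. {y\<in>Es'!j. g y = pf j}) [0..<?r]"
  have len'': "length Es'' = ?r" by (simp add: Es''_def)
  have nth'': "Es''!j = {y\<in>Es'!j. g y = pf j}" if "j < ?r" for j using that by (simp add: Es''_def)
  have sub'': "Es''!j \<subseteq> Es'!j" if "j < ?r" for j using nth''[OF that] by auto
  have o'': "\<forall>i j x y. i < j \<and> j < length Es'' \<and> x \<in> Es''!i \<and> y \<in> Es''!j \<longrightarrow> x < y"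
  proof (intro allI impI)
    fix i j x y assume h: "i < j \<and> j < length Es'' \<and> x \<in> Es''!i \<and> y \<in> Es''!j"
    then have "x \<in> (E # Es')!(Suc i)" "y \<in> (E # Es')!(Suc j)" using sub''[of i] sub''[of j] len'' by auto
    then show "x < y" using prems(1) h len'' by (metis Suc_less_SucD Suc_mono length_Cons)
  qed
  have b'': "\<forall>j<length Es''. \<forall>x\<in>Es''!j. 2 ^ length Es'' \<le> x"
  proof (intro allI impI ballI)
    fix j x assume "j < length Es''" "x \<in> Es''!j"
    then have "x \<in> (E # Es')!(Suc j)" "Suc j < length (E # Es')" using sub'' len'' by auto
    then have "2 ^ Suc ?r \<le> x" using prems(2) by force
    moreover have "(2::nat) ^ ?r \<le> 2 ^ Suc ?r" by simp
    ultimately show "2 ^ length Es'' \<le> x" using len'' by (metis order_trans)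
  qed
  have l'': "\<forall>j<length Es''. large (replicate (2 ^ (\<Sum>i<j. card (Es''!i))) (Suc n)) (Es''!j)"
  proof (intro allI impI)
    fix j assume j: "j < length Es''"
    have "(\<Sum>i<j. card (Es''!i)) \<le> s' j"
      unfolding s'_def using j len'' by (intro sum_mono card_mono) (auto intro: finEs' dest: sub''[THEN subsetD, rotated])
    then have "(2::nat) ^ (\<Sum>i<j. card (Es''!i)) \<le> 2 ^ s' j" by (intro power_increasing) auto
    then show "large (replicate (2 ^ (\<Sum>i<j. card (Es''!i))) (Suc n)) (Es''!j)"
      using large_del pf j len'' nth'' by metis
  qed
  have rr'': "r = length Es''" using rr len'' by simp
  from Suc.hyps(1)[of Es'', OF rr'' o'' b'' l''] obtain Gs'' where Gs0: "length Gs'' = length Es'' \<and>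
    (\<forall>j<length Es''. Gs''!j \<subseteq> Es''!j \<and> large [n] (Gs''!j)) \<and>
    (\<forall>i j. i < j \<and> j < length Es'' \<longrightarrow> (\<exists>c. \<forall>x\<in>Gs''!i. \<forall>y\<in>Gs''!j. P x y = c))" ..
  have Gs'': "length Gs'' = length Es''"
    "\<forall>j<length Es''. Gs''!j \<subseteq> Es''!j \<and> large [n] (Gs''!j)"
    "\<forall>i j. i < j \<and> j < length Es'' \<longrightarrow> (\<exists>c. \<forall>x\<in>Gs''!i. \<forall>y\<in>Gs''!j. P x y = c)"
    using Gs0[THEN conjunct1] Gs0[THEN conjunct2, THEN conjunct1] Gs0[THEN conjunct2, THEN conjunct2] by this+
  define v where "v x = {j. j < ?r \<and> x \<in> pf j}" for x
  have Ene: "E \<noteq> {}" and LE1: "large (replicate (Min E) n) (E - {Min E})" using LE0 by (auto simp: large_Suc)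
  have "Min E \<in> E" using Ene finE by simp
  then have "2 ^ Suc ?r \<le> Min E" using prems(2) by force
  then have "card (Pow {..<?r}) * 1 \<le> Min E" by (simp add: card_Pow)
  then have LE2: "large (replicate (card (Pow {..<?r}) * 1) n) (E - {Min E})" using large_del LE1 by blast
  have "v ` (E - {Min E}) \<subseteq> Pow {..<?r}" by (auto simp: v_def)
  from PHN[OF _ _ this LE2] obtain w where w: "large (replicate 1 n) {x\<in>E - {Min E}. v x = w}" by auto
  define G where "G = {x\<in>E - {Min E}. v x = w}"
  have a: "length (G # Gs'') = length (E # Es')" using Gs''(1) len'' by simp
  have b: "\<forall>j<length (E # Es'). (G # Gs'') ! j \<subseteq> (E # Es') ! j \<and> large [n] ((G # Gs'') ! j)"
  proof (intro allI impI)
    fix j assume j: "j < length (E # Es')"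
    show "(G # Gs'') ! j \<subseteq> (E # Es') ! j \<and> large [n] ((G # Gs'') ! j)"
    proof (cases j)
      case 0 then show ?thesis using w by (auto simp: G_def)
    next
      case (Suc j')
      then have j': "j' < length Es'" using j by simp
      then have "Gs''!j' \<subseteq> Es''!j'" "large [n] (Gs''!j')" using Gs''(2) len'' by auto
      then show ?thesis using sub''[OF j'] Suc by auto
    qed
  qed
  have c: "\<forall>i j. i < j \<and> j < length (E # Es') \<longrightarrow> (\<exists>c. \<forall>x\<in>(G # Gs'') ! i. \<forall>y\<in>(G # Gs'') ! j. P x y = c)"
  proof (intro allI impI)
    fix i j assume ij: "i < j \<and> j < length (E # Es')"
    then obtain j' where j': "j = Suc j'" "j' < ?r" by (cases j) auto
    show "\<exists>c. \<forall>x\<in>(G # Gs'') ! i. \<forall>y\<in>(G # Gs'') ! j. P x y = c"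
    proof (cases i)
      case 0
      show ?thesis
      proof (intro exI[of _ "j' \<in> w"] ballI)
        fix x y assume x: "x \<in> (G # Gs'') ! i" and y: "y \<in> (G # Gs'') ! j"
        have xG: "x \<in> E" "v x = w" using x 0 by (auto simp: G_def)
        have "y \<in> Es''!j'" using y j' Gs'' len'' by auto
        then have "g y = pf j'" using nth''[OF j'(2)] by auto
        then have "P x y = (x \<in> pf j')" using xG by (auto simp: g_def)
        also have "\<dots> = (j' \<in> w)" using xG(2) j'(2) by (auto simp: v_def)
        finally show "P x y = (j' \<in> w)" .
      qed
    next
      case (Suc i')
      then have "i' < j' \<and> j' < length Es''" using ij j' len'' by simp
      then have "\<exists>c. \<forall>x\<in>Gs''!i'. \<forall>y\<in>Gs''!j'. P x y = c" using Gs''(3) by blast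
      then show ?thesis using Suc j' by simp
    qed
  qed
  show ?case unfolding EEs by (rule exI[of _ "G # Gs''"]) (intro conjI a b c)
qed


theorem lemma2p7:
  fixes X :: "nat set" and n :: nat
  assumes "finite X" and "large (omega_pow (n + 6)) X" and "exp_sparse X"
  shows "\<forall>P :: nat \<Rightarrow> nat \<Rightarrow> bool. \<exists>Fs. grouping (omega_pow n) (omega_pow 1) X P Fs"
proof
  fix P :: "nat \<Rightarrow> nat \<Rightarrow> bool"
  have sp1: "\<forall>x\<in>X. 3 \<le> x" and sp2: "\<forall>x\<in>X. \<forall>y\<in>X. x < y \<longrightarrow> 4 ^ x < y"
    using assms(3) unfolding exp_sparse_def by blast+
  have ge1: "\<forall>s\<in>S. 1 \<le> s" if "S \<subseteq> X" for S using sp1 that by fastforce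
  have e6: "n + 6 = Suc (n + 5)" by simp
  have LX: "large [Suc (n + 5)] X" using assms(2) by (simp only: omega_pow_def e6)
  define x0 where "x0 = Min X"
  have Xne: "X \<noteq> {}" and L1: "large (replicate x0 (n + 5)) (X - {x0})"
    using LX unfolding large_Suc x0_def by auto
  have "x0 \<in> X" using Xne assms(1) by (simp add: x0_def)
  then have "2 \<le> x0" using sp1 by fastforce
  then have "large (replicate 2 (n + 5)) (X - {x0})" using large_del L1 by blast
  then have "large ([n + 5] @ [n + 5]) (X - {x0})" by (simp add: numeral_2_eq_2)
  from large_append_D[OF this] obtain S1 S2 where S12: "X - {x0} = S1 \<union> S2" "\<forall>x\<in>S1. \<forall>y\<in>S2. x < y"
      "large [n + 5] S1" "large [n + 5] S2" by blast
  have S1X: "S1 \<subseteq> X" and S2X: "S2 \<subseteq> X" using S12(1) by blast+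
  have "large [Suc n] S1" using large_lower[OF S12(3) _ ge1[OF S1X]] by simp
  then have S1ne: "S1 \<noteq> {}" and finS1: "finite S1" and LH: "large (replicate (Min S1) n) (S1 - {Min S1})"
    unfolding large_Suc by auto
  define H0 where "H0 = S1 - {Min S1}"
  have "Min S1 \<in> X" using S1X Min_in[OF finS1 S1ne] by blast
  then have "1 + 1 \<le> Min S1" using sp1 by fastforce
  then have LH0: "large (replicate (1 + 1) n) H0" using large_del LH unfolding H0_def by blast
  have H0X: "H0 \<subseteq> X" using S1X H0_def by blast
  have H0S1: "H0 \<subseteq> S1" using H0_def by blast
  have finH0: "finite H0" using finS1 H0_def by simp
  have H0ne: "H0 \<noteq> {}" using large_nonempty[OF LH0] by simp
  define M where "M = Max H0"
  have MH0: "M \<in> H0" using Max_in[OF finH0 H0ne] M_def by simp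
  have MX: "M \<in> X" using MH0 H0X by blast
  have MS1: "M \<in> S1" using MH0 H0S1 by blast
  have H0M: "H0 \<subseteq> {1..M}"
  proof
    fix x assume x: "x \<in> H0"
    then have "1 \<le> x" using H0X sp1 by fastforce
    moreover have "x \<le> M" using Max_ge[OF finH0 x] M_def by simp
    ultimately show "x \<in> {1..M}" by simp
  qed
  have cardH0: "card H0 \<le> M" using card_mono[OF finite_atLeastAtMost H0M] by simp
  have "large [Suc (Suc (Suc n))] S2" using large_lower[OF S12(4) _ ge1[OF S2X]] by simp
  then have S2ne: "S2 \<noteq> {}" and finS2: "finite S2"
    and LQ: "large (replicate (Min S2) (Suc (Suc n))) (S2 - {Min S2})"
    unfolding large_Suc by auto
  define q where "q = Min S2"
  define Q' where "Q' = S2 - {q}"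
  have qS2: "q \<in> S2" using Min_in[OF finS2 S2ne] q_def by simp
  have qX: "q \<in> X" using qS2 S2X by blast
  have Mq: "M < q" using S12(2) MS1 qS2 by blast
  have Mq4: "4 ^ M < q" using sp2 MX qX Mq by blast
  have cq: "card (Pow H0) * M \<le> q"
  proof -
    have "card (Pow H0) = 2 ^ card H0" using finH0 by (simp add: card_Pow)
    also have "\<dots> \<le> 2 ^ M" using cardH0 by (intro power_increasing) auto
    finally have "card (Pow H0) * M \<le> 2 ^ M * M" by simp
    also have "\<dots> \<le> 2 ^ M * 2 ^ M" using less_exp[of M] by (intro mult_le_mono2) simp
    also have "\<dots> = (2 * 2) ^ M" by (rule power_mult_distrib[symmetric])
    also have "\<dots> = 4 ^ M" by simp
    finally show ?thesis using Mq4 by (meson le_less_trans less_imp_le)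
  qed
  then have LQ': "large (replicate (card (Pow H0) * M) (Suc (Suc n))) Q'"
    using large_del LQ unfolding Q'_def q_def by blast
  define f where "f y = {x\<in>H0. P x y}" for y
  have fQ: "f ` Q' \<subseteq> Pow H0" by (auto simp: f_def)
  have "\<exists>p\<in>Pow H0. large (replicate M (Suc (Suc n))) {y\<in>Q'. f y = p}"
    by (rule PHN[OF _ _ fQ LQ']) (use finH0 in auto)
  then obtain p where p: "p \<in> Pow H0" "large (replicate M (Suc (Suc n))) {y\<in>Q'. f y = p}" by blast
  define Q1 where "Q1 = {y\<in>Q'. f y = p}"
  have Q1S2: "Q1 \<subseteq> S2" unfolding Q1_def Q'_def by blast
  have Q1q: "\<forall>y\<in>Q1. q \<le> y" using Q1S2 Min_le[OF finS2] unfolding q_def by blast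
  have Q1p: "\<forall>y\<in>Q1. f y = p" unfolding Q1_def by blast
  have G0ex: "\<exists>G0 c0. G0 \<subseteq> H0 \<and> large [n] G0 \<and> (\<forall>x\<in>G0. (x \<in> p) = c0)"
  proof -
    from PH2[OF LH0, of "\<lambda>x. x \<in> p"]
    have "large [n] {x\<in>H0. x \<in> p} \<or> large [n] {x\<in>H0. x \<notin> p}" by simp
    then show ?thesis
    proof
      assume "large [n] {x\<in>H0. x \<in> p}"
      then show ?thesis by (intro exI[of _ "{x\<in>H0. x \<in> p}"] exI[of _ True]) auto
    next
      assume "large [n] {x\<in>H0. x \<notin> p}"
      then show ?thesis by (intro exI[of _ "{x\<in>H0. x \<notin> p}"] exI[of _ False]) auto
    qed
  qed
  then obtain G0 c0 where G0: "G0 \<subseteq> H0" "large [n] G0" "\<forall>x\<in>G0. (x \<in> p) = c0" by blast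
  from blocks[OF p(2)[folded Q1_def]] obtain Ds where Ds0: "length Ds = M \<and>
     (\<forall>j<M. Ds!j \<subseteq> Q1 \<and> large [Suc (Suc n)] (Ds!j)) \<and>
     (\<forall>i j x y. i < j \<and> j < M \<and> x \<in> Ds!i \<and> y \<in> Ds!j \<longrightarrow> x < y)" ..
  have Ds1: "length Ds = M" and Ds2: "\<forall>j<M. Ds!j \<subseteq> Q1 \<and> large [Suc (Suc n)] (Ds!j)"
    and Ds3: "\<forall>i j x y. i < j \<and> j < M \<and> x \<in> Ds!i \<and> y \<in> Ds!j \<longrightarrow> x < y"
    using Ds0[THEN conjunct1] Ds0[THEN conjunct2, THEN conjunct1] Ds0[THEN conjunct2, THEN conjunct2]
    by this+
  define Es where "Es = map (\<lambda>D. D - {Min D}) Ds"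
  have lenEs: "length Es = M" using Ds1 Es_def by simp
  have nthEs: "Es!j = Ds!j - {Min (Ds!j)}" if "j < M" for j using that Ds1 Es_def by simp
  have EsDs: "Es!j \<subseteq> Ds!j" if "j < M" for j using nthEs[OF that] by blast
  have DsQ1: "Ds!j \<subseteq> Q1" if "j < M" for j using Ds2 that by blast
  have DsX: "Ds!j \<subseteq> X" if "j < M" for j using DsQ1[OF that] Q1S2 S2X by blast
  have o: "\<forall>i j x y. i < j \<and> j < length Es \<and> x \<in> Es!i \<and> y \<in> Es!j \<longrightarrow> x < y"
  proof (intro allI impI)
    fix i j x y assume h: "i < j \<and> j < length Es \<and> x \<in> Es!i \<and> y \<in> Es!j"
    then have "i < j \<and> j < M \<and> x \<in> Ds!i \<and> y \<in> Ds!j" using EsDs[of i] EsDs[of j] lenEs by auto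
    then show "x < y" using Ds3 by blast
  qed
  have b: "\<forall>j<length Es. \<forall>x\<in>Es!j. 2 ^ length Es \<le> x"
  proof (intro allI impI ballI)
    fix j x assume j: "j < length Es" and x: "x \<in> Es!j"
    then have "x \<in> Q1" using EsDs[of j] DsQ1[of j] lenEs by auto
    then have qx: "q \<le> x" using Q1q by blast
    have "(2::nat) ^ M \<le> 4 ^ M" by (rule power_mono) simp_all
    then have "2 ^ M \<le> x" using Mq4 qx by linarith
    then show "2 ^ length Es \<le> x" using lenEs by simp
  qed
  have l: "\<forall>j<length Es. large (replicate (2 ^ (\<Sum>i<j. card (Es!i))) (Suc n)) (Es!j)"
  proof (intro allI impI)
    fix j assume j0: "j < length Es"
    then have j: "j < M" using lenEs by simp
    let ?D = "Ds!j"
    have LD: "large [Suc (Suc n)] ?D" using Ds2 j by blast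
    then have Dne: "?D \<noteq> {}" and finD: "finite ?D"
      and LE: "large (replicate (Min ?D) (Suc n)) (?D - {Min ?D})"
      unfolding large_Suc by auto
    have dD: "Min ?D \<in> ?D" using Min_in[OF finD Dne] .
    have dX: "Min ?D \<in> X" using dD DsX[OF j] by blast
    have finEi: "finite (Es!i)" if "i < j" for i
    proof -
      have iM: "i < M" using that j by simp
      have "finite (Ds!i)" by (rule finite_subset[OF DsX[OF iM] assms(1)])
      then show ?thesis by (rule finite_subset[OF EsDs[OF iM]])
    qed
    have disj: "Es!i \<inter> Es!i' = {}" if "i \<in> {..<j}" "i' \<in> {..<j}" "i \<noteq> i'" for i i'
    proof -
      have "i < j" "i' < j" using that by auto
      then have ilen: "i < length Es" "i' < length Es" using j0 by auto
      show ?thesis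
      proof (cases "i < i'")
        case True
        then show ?thesis using o ilen by (meson disjoint_iff less_irrefl)
      next
        case False
        then have "i' < i" using that(3) by simp
        then show ?thesis using o ilen by (meson disjoint_iff less_irrefl)
      qed
    qed
    have "(\<Sum>i<j. card (Es!i)) = card (\<Union>i<j. Es!i)"
      by (rule card_UN_disjoint[symmetric]) (use finEi disj in auto)
    also have "\<dots> \<le> card {x\<in>X. x < Min ?D}"
    proof (rule card_mono)
      show "finite {x\<in>X. x < Min ?D}" using assms(1) by simp
      show "(\<Union>i<j. Es!i) \<subseteq> {x\<in>X. x < Min ?D}"
      proof
        fix x assume "x \<in> (\<Union>i<j. Es!i)"
        then obtain i where i: "i < j" "x \<in> Es!i" by blast
        have iM: "i < M" using i j by simp
        have xD: "x \<in> Ds!i" using EsDs[OF iM] i by auto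
        then have "x < Min ?D" using Ds3 i j dD by blast
        moreover have "x \<in> X" using DsX[OF iM] xD by auto
        ultimately show "x \<in> {x\<in>X. x < Min ?D}" by blast
      qed
    qed
    finally have sumle: "(\<Sum>i<j. card (Es!i)) \<le> card {x\<in>X. x < Min ?D}" .
    have "(2::nat) ^ (\<Sum>i<j. card (Es!i)) \<le> 2 ^ card {x\<in>X. x < Min ?D}"
      using sumle by (intro power_increasing) auto
    also have "\<dots> \<le> Min ?D" using sparse_count[OF assms(3) dX] .
    finally show "large (replicate (2 ^ (\<Sum>i<j. card (Es!i))) (Suc n)) (Es!j)"
      using large_del[OF LE] nthEs[OF j] by simp
  qed
  from PG[where P=P, OF o b l] obtain Gs where Gs0: "length Gs = length Es \<and>
     (\<forall>j<length Es. Gs!j \<subseteq> Es!j \<and> large [n] (Gs!j)) \<and>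
     (\<forall>i j. i < j \<and> j < length Es \<longrightarrow> (\<exists>c. \<forall>x\<in>Gs!i. \<forall>y\<in>Gs!j. P x y = c))" ..
  have Gs1: "length Gs = M" using Gs0[THEN conjunct1] lenEs by simp
  have Gs2: "Gs!j \<subseteq> Es!j \<and> large [n] (Gs!j)" if "j < M" for j
    using Gs0[THEN conjunct2, THEN conjunct1] that lenEs by simp
  have Gs3: "\<exists>c. \<forall>x\<in>Gs!i. \<forall>y\<in>Gs!j. P x y = c" if "i < j" "j < M" for i j
    using Gs0[THEN conjunct2, THEN conjunct2] that lenEs by simp
  have GsQ1: "Gs!j \<subseteq> Q1" if "j < M" for j using Gs2[OF that] EsDs[OF that] DsQ1[OF that] by blast
  have GsEs: "Gs!j \<subseteq> Es!j" if "j < M" for j using Gs2[OF that] by blast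
  define Fs where "Fs = G0 # Gs"
  have lenFs: "length Fs = Suc M" using Gs1 Fs_def by simp
  have FsXL: "Fs!i \<subseteq> X \<and> large [n] (Fs!i)" if "i < length Fs" for i
  proof (cases i)
    case 0 then show ?thesis using G0 H0X Fs_def by auto
  next
    case (Suc i')
    then have iM: "i' < M" using that lenFs by simp
    then show ?thesis using Gs2[OF iM] GsQ1[OF iM] Q1S2 S2X Fs_def Suc by auto
  qed
  have Fsfin: "finite (Fs!i)" and Fsne: "Fs!i \<noteq> {}" if "i < length Fs" for i
    using FsXL[OF that] assms(1) finite_subset large_nonempty by auto
  have Fsord: "x < y" if hh: "i < j" "j < length Fs" "x \<in> Fs!i" "y \<in> Fs!j" for i j x y
  proof -
    obtain j' where j': "j = Suc j'" "j' < M" using hh lenFs by (cases j) auto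
    have yQ: "y \<in> Gs!j'" using that(4) j' Fs_def by simp
    show ?thesis
    proof (cases i)
      case 0
      then have "x \<in> S1" using that(3) G0(1) H0S1 Fs_def by auto
      moreover have "y \<in> S2" using yQ GsQ1[OF j'(2)] Q1S2 by blast
      ultimately show ?thesis using S12(2) by blast
    next
      case (Suc i')
      then have "i' < j'" "x \<in> Gs!i'" using that j' Fs_def by auto
      moreover have "i' < M" using \<open>i' < j'\<close> j' by simp
      ultimately have "i' < j' \<and> j' < length Es \<and> x \<in> Es!i' \<and> y \<in> Es!j'"
        using GsEs[of i'] GsEs[of j'] yQ j' lenEs by auto
      then show ?thesis using o by blast
    qed
  qed
  have MaxMin: "Max (Fs!i) < Min (Fs!j)" if "i < j" "j < length Fs" for i j
  proof -
    have "i < length Fs" using that by simp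
    then have "Max (Fs!i) \<in> Fs!i" using Fsfin Fsne by simp
    moreover have "Min (Fs!j) \<in> Fs!j" using Fsfin[OF that(2)] Fsne[OF that(2)] by simp
    ultimately show ?thesis using Fsord that by blast
  qed
  have cross: "P x y = P x' y'" if "i < j" "j < length Fs" "x \<in> Fs!i" "x' \<in> Fs!i" "y \<in> Fs!j" "y' \<in> Fs!j"
    for i j x x' y y'
  proof -
    have ij: "i < j" "j < length Fs" using that(1,2) by auto
    obtain j' where j': "j = Suc j'" "j' < M" using ij lenFs by (cases j) auto
    show ?thesis
    proof (cases i)
      case 0
      have c: "P u v = c0" if "u \<in> G0" "v \<in> Gs!j'" for u v
      proof -
        have "v \<in> Q1" using that(2) GsQ1[OF j'(2)] by blast
        then have "f v = p" using Q1p by blast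
        moreover have "u \<in> H0" using that(1) G0(1) by blast
        ultimately have "P u v = (u \<in> p)" unfolding f_def by blast
        then show ?thesis using G0(3) that(1) by blast
      qed
      show ?thesis using c that(3-6) 0 j' Fs_def by simp
    next
      case (Suc i')
      then have "i' < j'" using that j' by simp
      from Gs3[OF this j'(2)] obtain c where "\<forall>x\<in>Gs!i'. \<forall>y\<in>Gs!j'. P x y = c" by blast
      then show ?thesis using that(3-6) Suc j' Fs_def by simp
    qed
  qed
  have V: "large [Suc 0] {Max (Fs!i) |i. i < length Fs}"
  proof -
    define V where "V = {Max (Fs!i) |i. i < length Fs}"
    have Vim: "V = (\<lambda>i. Max (Fs!i)) ` {..<length Fs}" unfolding V_def by blast
    have inj: "inj_on (\<lambda>i. Max (Fs!i)) {..<length Fs}"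
    proof (rule inj_onI)
      fix i i' assume i: "i \<in> {..<length Fs}" and i': "i' \<in> {..<length Fs}" and eq: "Max (Fs!i) = Max (Fs!i')"
      show "i = i'"
      proof (rule ccontr)
        assume "i \<noteq> i'"
        then consider "i < i'" | "i' < i" by linarith
        then show False
        proof cases
          case 1
          have "Max (Fs!i) < Min (Fs!i')" using MaxMin 1 i' by simp
          moreover have "Min (Fs!i') \<le> Max (Fs!i')" using Fsfin Fsne i' by simp
          ultimately show False using eq by simp
        next
          case 2
          have "Max (Fs!i') < Min (Fs!i)" using MaxMin 2 i by simp
          moreover have "Min (Fs!i) \<le> Max (Fs!i)" using Fsfin Fsne i by simp
          ultimately show False using eq by simp
        qed
      qed
    qed
    have cardV: "card V = Suc M" using card_image[OF inj] Vim lenFs by simp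
    have finV: "finite V" using Vim by simp
    have m0: "Max G0 \<in> V" unfolding V_def using lenFs Fs_def by force
    then have Vne: "V \<noteq> {}" by blast
    have "Min V \<le> Max G0" using Min_le[OF finV m0] .
    also have "Max G0 \<le> M" unfolding M_def
      using G0(1) finH0 large_nonempty[OF G0(2)] by (intro Max_mono) auto
    finally have mVM: "Min V \<le> M" .
    have "Min V \<in> V" using Min_in[OF finV Vne] .
    then have "card (V - {Min V}) = M" using cardV finV by simp
    then have "large (replicate (Min V) 0) (V - {Min V})" using mVM finV by (simp add: large_rep0)
    then show ?thesis using finV Vne unfolding V_def[symmetric] large_Suc by simp
  qed
  show "\<exists>Fs. grouping (omega_pow n) (omega_pow 1) X P Fs"
    unfolding grouping_def omega_pow_def One_nat_def
  proof (intro exI[of _ Fs] conjI allI impI)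
    fix i assume "i < length Fs" then show "finite (Fs!i)" using Fsfin by blast
  next
    fix i assume "i < length Fs" then show "Fs!i \<subseteq> X" using FsXL by blast
  next
    fix i j assume "i < j \<and> j < length Fs" then show "Max (Fs!i) < Min (Fs!j)" using MaxMin by blast
  next
    fix i assume "i < length Fs" then show "large [n] (Fs!i)" using FsXL by blast
  next
    show "large [Suc 0] {Max (Fs!i) |i. i < length Fs}" by (rule V)
  next
    fix i j assume "i < j \<and> j < length Fs"
    then show "\<forall>x\<in>Fs!i. \<forall>x'\<in>Fs!i. \<forall>y\<in>Fs!j. \<forall>y'\<in>Fs!j. P x y = P x' y'"
      using cross by blast
  qed
qed

end
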